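(* Let \(G\) be a connected complex reductive group with a fixed Borel subgroup \(B\), maximal torus \(T\subset B\), positive roots \(R^+\), and \(\varpi=\frac12\sum_{\alpha\in R^+}\alpha\); fix a Weyl-invariant scalar product \(\langle\cdot,\cdot\rangle\) on \(\mathfrak{X}(T)\otimes\mathbb{R}\). Let \(X\) be a projective rank one \(G\)-spherical variety with spherical lattice \(M\), let \(\sigma\) be its spherical root if \(X\) is not horospherical and any generator of \(M\) otherwise, and let \(L\) be an ample line bundle on \(X\) with moment polytope \(\Delta_+=\{\chi+t\sigma\mid t\in[s_-,s_+]\}\), where \(\chi\in\Delta_+\) and \(s_-<s_+\). Let \(R_X^+\) be the set of positive roots not vanishing identically on \(\Delta_+\), and set \[P(t)=\prod_{\alpha\in R_X^+}\frac{\langle\alpha,\chi+t\sigma\rangle}{\langle\alpha,\varpi\rangle},\qquad Q(t)=\Big(\sum_{\alpha\in R_X^+}\frac{\langle\alpha,\varpi\rangle}{\langle\alpha,\chi+t\sigma\rangle}\Big)P(t),\] and let \(a\in\mathbb{R}\) be the number such that \(P(s_-)+P(s_+)-\int_{s_-}^{s_+}2(aP(t)-Q(t))\,dt=0\). If \(P(s_+)=0\) (resp. \(P(s_-)=0\)), then \((aP-Q)(t)<0\) for all \(t\in[s_-,s_+]\) sufficiently close to \(s_+\) (resp. \(s_-\)).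
   Context: The moment polytope \(\Delta_+\) of \(L\) is the closure of the set of all \(\lambda/k\in\mathfrak{X}(T)\otimes\mathbb{R}\), where \(\lambda\) runs over weights of \(B\)-stable lines in \(H^0(X,L^{\otimes k})\), \(k\geq1\); it is a segment in an affine line with direction \(M\otimes\mathbb{R}\), contained in the positive Weyl chamber, so \(P\) and \(Q\) are positive on \(]s_-,s_+[\). For non-horospherical \(X\), the spherical root is the generator of \(M\) evaluating negatively on the (unique one-dimensional) cone of the colored fan of \(X\). *)

theory Defs
  imports "HOL-Analysis.Analysis"
begin

text \<open>Abstract combinatorial data attached to a connected reductive group G with
 Borel B and maximal torus T: the space X(T) \<otimes> R is modelled by a euclidean space
 'a whose inner product is the fixed (Weyl-invariant) scalar product.\<close>

definition reflection :: "'a::real_inner \<Rightarrow> 'a \<Rightarrow> 'a" where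
  "reflection \<alpha> x = x - (2 * inner \<alpha> x / inner \<alpha> \<alpha>) *\<^sub>R \<alpha>"

definition root_system :: "'a::euclidean_space set \<Rightarrow> bool" where
  "root_system R \<longleftrightarrow> finite R \<and> 0 \<notin> R
     \<and> (\<forall>\<alpha>\<in>R. \<forall>\<beta>\<in>R. reflection \<alpha> \<beta> \<in> R)
     \<and> (\<forall>\<alpha>\<in>R. \<forall>\<beta>\<in>R. 2 * inner \<alpha> \<beta> / inner \<alpha> \<alpha> \<in> \<int>)
     \<and> (\<forall>\<alpha>\<in>R. \<forall>c. c *\<^sub>R \<alpha> \<in> R \<longrightarrow> c = 1 \<or> c = -1)"

definition positive_system :: "'a::euclidean_space set \<Rightarrow> 'a set \<Rightarrow> bool" where
  "positive_system R Rp \<longleftrightarrow> (\<exists>h. (\<forall>\<alpha>\<in>R. inner \<alpha> h \<noteq> 0) \<and> Rp = {\<alpha>\<in>R. inner \<alpha> h > 0})"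

definition half_sum :: "'a::euclidean_space set \<Rightarrow> 'a" where
  "half_sum Rp = (1/2) *\<^sub>R (\<Sum>\<alpha>\<in>Rp. \<alpha>)"

definition pos_chamber :: "'a::euclidean_space set \<Rightarrow> 'a set" where
  "pos_chamber Rp = {x. \<forall>\<alpha>\<in>Rp. inner \<alpha> x \<ge> 0}"

definition RXp :: "'a::euclidean_space set \<Rightarrow> 'a \<Rightarrow> 'a \<Rightarrow> real \<Rightarrow> real \<Rightarrow> 'a set" where
  "RXp Rp chi sig sm sp = {\<alpha>\<in>Rp. \<exists>t\<in>{sm..sp}. inner \<alpha> (chi + t *\<^sub>R sig) \<noteq> 0}"

definition Ppoly :: "'a::euclidean_space set \<Rightarrow> 'a \<Rightarrow> 'a \<Rightarrow> 'a set \<Rightarrow> real \<Rightarrow> real" where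
  "Ppoly RX chi sig Rp t =
     (\<Prod>\<alpha>\<in>RX. inner \<alpha> (chi + t *\<^sub>R sig) / inner \<alpha> (half_sum Rp))"

definition Qfun :: "'a::euclidean_space set \<Rightarrow> 'a \<Rightarrow> 'a \<Rightarrow> 'a set \<Rightarrow> real \<Rightarrow> real" where
  "Qfun RX chi sig Rp t =
     (\<Sum>\<alpha>\<in>RX. inner \<alpha> (half_sum Rp) / inner \<alpha> (chi + t *\<^sub>R sig)) * Ppoly RX chi sig Rp t"

end

theory Submission
  imports Defs
begin

lemma rho_pos:
  fixes R Rp :: "'a::euclidean_space set"
  assumes "root_system R" and "positive_system R Rp" and "\<alpha> \<in> Rp"
  shows "inner \<alpha> (half_sum Rp) > 0"
proof -
  from assms(2) obtain h where hreg: "\<forall>\<alpha>\<in>R. inner \<alpha> h \<noteq> 0"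
    and Rp: "Rp = {\<alpha>\<in>R. inner \<alpha> h > 0}" unfolding positive_system_def by blast
  have finR: "finite R" and z: "0 \<notin> R" and refl: "\<forall>\<alpha>\<in>R. \<forall>\<beta>\<in>R. reflection \<alpha> \<beta> \<in> R"
    using assms(1) unfolding root_system_def by auto
  have aR: "\<alpha> \<in> R" and ah: "inner \<alpha> h > 0" using assms(3) Rp by auto
  have aa: "inner \<alpha> \<alpha> > 0" using aR z by auto
  have finRp: "finite Rp" using Rp finR by auto
  define s where "s = reflection \<alpha>"
  have s_inner: "inner \<alpha> (s \<beta>) = - inner \<alpha> \<beta>" for \<beta>
    using aa unfolding s_def reflection_def by (simp add: inner_diff_right field_simps)
  have ss: "s (s \<beta>) = \<beta>" for \<beta>
    using aa unfolding s_def reflection_def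
    by (simp add: inner_diff_right algebra_simps field_simps)
  define A where "A = {\<beta>\<in>Rp. inner (s \<beta>) h > 0}"
  have AsubRp: "A \<subseteq> Rp" unfolding A_def by auto
  have finA: "finite A" using finRp AsubRp finite_subset by blast
  have sA: "s \<beta> \<in> A" if "\<beta> \<in> A" for \<beta>
  proof -
    have "\<beta> \<in> R" using that Rp A_def by auto
    then have "s \<beta> \<in> R" using refl aR s_def by auto
    moreover have "inner (s (s \<beta>)) h > 0" using ss that A_def Rp by auto
    ultimately show ?thesis using that unfolding A_def Rp by auto
  qed
  have bij: "bij_betw s A A"
    by (rule bij_betw_byWitness[where f'=s]) (auto simp: ss sA)
  have "(\<Sum>\<beta>\<in>A. inner \<alpha> \<beta>) = (\<Sum>\<beta>\<in>A. inner \<alpha> (s \<beta>))"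
    using sum.reindex_bij_betw[OF bij, of "\<lambda>\<beta>. inner \<alpha> \<beta>"] by simp
  also have "\<dots> = - (\<Sum>\<beta>\<in>A. inner \<alpha> \<beta>)" by (simp add: s_inner sum_negf)
  finally have sumA: "(\<Sum>\<beta>\<in>A. inner \<alpha> \<beta>) = 0" by simp
  have posN: "inner \<alpha> \<beta> > 0" if "\<beta> \<in> Rp - A" for \<beta>
  proof -
    have bh: "inner \<beta> h > 0" using that Rp by auto
    have "inner (s \<beta>) h \<le> 0" using that A_def by auto
    then have "inner \<beta> h - (2 * inner \<alpha> \<beta> / inner \<alpha> \<alpha>) * inner \<alpha> h \<le> 0"
      unfolding s_def reflection_def by (simp add: inner_diff_left)
    then have "(2 * inner \<alpha> \<beta> / inner \<alpha> \<alpha>) * inner \<alpha> h > 0" using bh by linarith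
    then have "2 * inner \<alpha> \<beta> / inner \<alpha> \<alpha> > 0" using ah
      using zero_less_mult_pos2 by blast
    then show ?thesis using aa by (simp add: zero_less_divide_iff)
  qed
  have aN: "\<alpha> \<in> Rp - A"
  proof -
    have "s \<alpha> = - \<alpha>" using aa unfolding s_def reflection_def by (simp add: algebra_simps scaleR_2)
    then show ?thesis using assms(3) ah unfolding A_def by auto
  qed
  have "(\<Sum>\<beta>\<in>Rp. inner \<alpha> \<beta>) = (\<Sum>\<beta>\<in>A. inner \<alpha> \<beta>) + (\<Sum>\<beta>\<in>Rp - A. inner \<alpha> \<beta>)"
    using sum.subset_diff[OF AsubRp finRp] by (simp add: add.commute)
  also have "\<dots> = (\<Sum>\<beta>\<in>Rp - A. inner \<alpha> \<beta>)" using sumA by simp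
  also have "\<dots> > 0"
    using sum_pos2[OF _ aN, of "\<lambda>\<beta>. inner \<alpha> \<beta>"] finRp posN aN aa
    by (simp add: less_imp_le)
  finally show ?thesis unfolding half_sum_def by (simp add: inner_sum_right)
qed

lemma core:
  fixes g :: "'b \<Rightarrow> real \<Rightarrow> real"
  assumes "finite I" "\<forall>\<alpha>\<in>I. c \<alpha> > 0" "\<alpha>0 \<in> I"
    "\<forall>\<^sub>F t in F. \<forall>\<alpha>\<in>I. g \<alpha> t > 0" "filterlim (g \<alpha>0) (at_right 0) F"
  shows "\<forall>\<^sub>F t in F. a * (\<Prod>\<alpha>\<in>I. g \<alpha> t / c \<alpha>)
            - (\<Sum>\<alpha>\<in>I. c \<alpha> / g \<alpha> t) * (\<Prod>\<alpha>\<in>I. g \<alpha> t / c \<alpha>) < 0"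
proof -
  have c0: "c \<alpha>0 > 0" using assms by auto
  have "filterlim (\<lambda>t. c \<alpha>0 * inverse (g \<alpha>0 t)) at_top F"
    by (rule filterlim_tendsto_pos_mult_at_top[OF tendsto_const c0
          filterlim_compose[OF filterlim_inverse_at_top_right assms(5)]])
  then have ev: "\<forall>\<^sub>F t in F. a + 1 \<le> c \<alpha>0 * inverse (g \<alpha>0 t)"
    unfolding filterlim_at_top by blast
  from ev assms(4) show ?thesis
  proof eventually_elim
    case (elim t)
    have P: "(\<Prod>\<alpha>\<in>I. g \<alpha> t / c \<alpha>) > 0"
      using elim(2) assms(2) by (intro prod_pos) auto
    have "c \<alpha>0 / g \<alpha>0 t \<le> (\<Sum>\<alpha>\<in>I. c \<alpha> / g \<alpha> t)"
      using elim(2) assms(1,2,3)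
      by (intro member_le_sum) (auto simp: less_imp_le)
    then have "a < (\<Sum>\<alpha>\<in>I. c \<alpha> / g \<alpha> t)" using elim(1) by (simp add: divide_inverse)
    then have "(a - (\<Sum>\<alpha>\<in>I. c \<alpha> / g \<alpha> t)) * (\<Prod>\<alpha>\<in>I. g \<alpha> t / c \<alpha>) < 0"
      using P by (simp add: mult_neg_pos)
    then show ?case by (simp add: algebra_simps)
  qed
qed

theorem lemma3p2:
  fixes R Rp :: "'a::euclidean_space set"
    and chi sig :: 'a and sm sp a :: real
  assumes "root_system R" and "positive_system R Rp"
    and "sig \<noteq> 0" and "sm < sp"
    and "sm \<le> 0" and "0 \<le> sp"
    and "\<forall>t\<in>{sm..sp}. chi + t *\<^sub>R sig \<in> pos_chamber Rp"
    and "Ppoly (RXp Rp chi sig sm sp) chi sig Rp sm + Ppoly (RXp Rp chi sig sm sp) chi sig Rp sp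
          - integral {sm..sp} (\<lambda>t. 2 * (a * Ppoly (RXp Rp chi sig sm sp) chi sig Rp t
                                       - Qfun (RXp Rp chi sig sm sp) chi sig Rp t)) = 0"
  shows "(Ppoly (RXp Rp chi sig sm sp) chi sig Rp sp = 0 \<longrightarrow>
            (\<forall>\<^sub>F t in at_left sp. a * Ppoly (RXp Rp chi sig sm sp) chi sig Rp t
                                   - Qfun (RXp Rp chi sig sm sp) chi sig Rp t < 0))
       \<and> (Ppoly (RXp Rp chi sig sm sp) chi sig Rp sm = 0 \<longrightarrow>
            (\<forall>\<^sub>F t in at_right sm. a * Ppoly (RXp Rp chi sig sm sp) chi sig Rp t
                                   - Qfun (RXp Rp chi sig sm sp) chi sig Rp t < 0))"
proof -
  define RX where "RX = RXp Rp chi sig sm sp"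
  define c where "c = (\<lambda>\<alpha>. inner \<alpha> (half_sum Rp))"
  define g where "g = (\<lambda>\<alpha> t. inner \<alpha> chi + t * inner \<alpha> sig)"
  have g_eq: "inner \<alpha> (chi + t *\<^sub>R sig) = g \<alpha> t" for \<alpha> t
    unfolding g_def by (simp add: inner_add_right)
  have PP: "Ppoly RX chi sig Rp t = (\<Prod>\<alpha>\<in>RX. g \<alpha> t / c \<alpha>)" for t
    unfolding Ppoly_def g_eq c_def ..
  have QQ: "Qfun RX chi sig Rp t = (\<Sum>\<alpha>\<in>RX. c \<alpha> / g \<alpha> t) * (\<Prod>\<alpha>\<in>RX. g \<alpha> t / c \<alpha>)" for t
    unfolding Qfun_def PP by (simp add: g_eq c_def)
  from assms(2) obtain h where Rp: "Rp = {\<alpha>\<in>R. inner \<alpha> h > 0}"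
    unfolding positive_system_def by blast
  have finR: "finite R" using assms(1) unfolding root_system_def by auto
  have RXsub: "RX \<subseteq> Rp" unfolding RX_def RXp_def by auto
  have finRX: "finite RX" using RXsub Rp finR by (metis (no_types, lifting) finite_subset mem_Collect_eq subsetI)
  have cpos: "\<forall>\<alpha>\<in>RX. c \<alpha> > 0" using rho_pos[OF assms(1,2)] RXsub c_def by auto
  have gnn: "g \<alpha> t \<ge> 0" if "\<alpha> \<in> RX" "t \<in> {sm..sp}" for \<alpha> t
    using assms(7) that RXsub unfolding pos_chamber_def by (auto simp: g_eq)
  have gnz: "\<exists>t\<in>{sm..sp}. g \<alpha> t \<noteq> 0" if "\<alpha> \<in> RX" for \<alpha>
    using that unfolding RX_def RXp_def by (auto simp: g_eq)
  have gpos: "g \<alpha> t > 0" if a: "\<alpha> \<in> RX" and t: "t \<in> {sm<..<sp}" for \<alpha> t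
  proof (rule ccontr)
    assume "\<not> g \<alpha> t > 0"
    moreover have "g \<alpha> t \<ge> 0" using gnn[OF a, of t] t by simp
    ultimately have g0: "g \<alpha> t = 0" by simp
    have gs: "g \<alpha> s = (s - t) * inner \<alpha> sig" for s
      using g0 unfolding g_def by (simp add: algebra_simps)
    have "(sm - t) * inner \<alpha> sig \<ge> 0" using gnn[OF a, of sm] assms(4) gs by simp
    then have "inner \<alpha> sig \<le> 0" using t by (simp add: mult_le_0_iff zero_le_mult_iff)
    moreover have "(sp - t) * inner \<alpha> sig \<ge> 0" using gnn[OF a, of sp] assms(4) gs by simp
    then have "inner \<alpha> sig \<ge> 0" using t by (simp add: zero_le_mult_iff)
    ultimately have "inner \<alpha> sig = 0" by simp
    then show False using gnz[OF a] gs by simp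
  qed
  have lin_tend: "(g \<alpha> \<longlongrightarrow> g \<alpha> x) (at x within S)" for \<alpha> x S
    unfolding g_def by (intro tendsto_intros)
  show ?thesis
    unfolding RX_def[symmetric] PP QQ
  proof (intro conjI impI)
    assume "(\<Prod>\<alpha>\<in>RX. g \<alpha> sp / c \<alpha>) = 0"
    then obtain \<alpha>0 where a0: "\<alpha>0 \<in> RX" "g \<alpha>0 sp / c \<alpha>0 = 0" using finRX by auto
    then have g0: "g \<alpha>0 sp = 0" using cpos by auto
    have evI: "\<forall>\<^sub>F t in at_left sp. t \<in> {sm<..<sp}" by (rule eventually_at_left_real[OF assms(4)])
    show "\<forall>\<^sub>F t in at_left sp. a * (\<Prod>\<alpha>\<in>RX. g \<alpha> t / c \<alpha>)
            - (\<Sum>\<alpha>\<in>RX. c \<alpha> / g \<alpha> t) * (\<Prod>\<alpha>\<in>RX. g \<alpha> t / c \<alpha>) < 0"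
    proof (rule core[OF finRX cpos a0(1)])
      show "\<forall>\<^sub>F t in at_left sp. \<forall>\<alpha>\<in>RX. 0 < g \<alpha> t"
        using evI by eventually_elim (auto intro: gpos)
      show "filterlim (g \<alpha>0) (at_right 0) (at_left sp)"
        unfolding filterlim_at
      proof
        show "\<forall>\<^sub>F x in at_left sp. g \<alpha>0 x \<in> {0<..} \<and> g \<alpha>0 x \<noteq> 0"
          using evI by eventually_elim (use gpos[OF a0(1)] in force)
        show "(g \<alpha>0 \<longlongrightarrow> 0) (at_left sp)" using lin_tend[of \<alpha>0 sp] g0 by simp
      qed
    qed
  next
    assume "(\<Prod>\<alpha>\<in>RX. g \<alpha> sm / c \<alpha>) = 0"
    then obtain \<alpha>0 where a0: "\<alpha>0 \<in> RX" "g \<alpha>0 sm / c \<alpha>0 = 0" using finRX by auto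
    then have g0: "g \<alpha>0 sm = 0" using cpos by auto
    have evI: "\<forall>\<^sub>F t in at_right sm. t \<in> {sm<..<sp}" by (rule eventually_at_right_real[OF assms(4)])
    show "\<forall>\<^sub>F t in at_right sm. a * (\<Prod>\<alpha>\<in>RX. g \<alpha> t / c \<alpha>)
            - (\<Sum>\<alpha>\<in>RX. c \<alpha> / g \<alpha> t) * (\<Prod>\<alpha>\<in>RX. g \<alpha> t / c \<alpha>) < 0"
    proof (rule core[OF finRX cpos a0(1)])
      show "\<forall>\<^sub>F t in at_right sm. \<forall>\<alpha>\<in>RX. 0 < g \<alpha> t"
        using evI by eventually_elim (auto intro: gpos)
      show "filterlim (g \<alpha>0) (at_right 0) (at_right sm)"
        unfolding filterlim_at
      proof
        show "\<forall>\<^sub>F x in at_right sm. g \<alpha>0 x \<in> {0<..} \<and> g \<alpha>0 x \<noteq> 0"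
          using evI by eventually_elim (use gpos[OF a0(1)] in force)
        show "(g \<alpha>0 \<longlongrightarrow> 0) (at_right sm)" using lin_tend[of \<alpha>0 sm] g0 by simp
      qed
    qed
  qed
qed

end
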